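(* Let $\Gamma$ be a finite metric tree and let $f\colon\Gamma\to[0,\infty)$ be a continuous edge-linear function. If $f=\sum_\alpha f_\alpha$ is a unimodal decomposition of $f$, then there is a unimodal decomposition $f=\sum_\alpha g_\alpha$ with the same number of components in which every component $g_\alpha$ is edge-linear.
   Context: A finite metric tree $\Gamma$ is a compact contractible 1-dimensional metric space stratified into finitely many vertices and open edges. A function is edge-linear if its restriction to each edge is affine with respect to the edge's metric. A continuous function $u\colon\Gamma\to[0,\infty)$ with maximal value $M$ is unimodal if its upper excursion sets $u^{-1}([c,\infty))$ are contractible for all $0<c\le M$ (and empty for $c>M$). A unimodal decomposition of $f$ is a finite family of unimodal functions whose pointwise sum is $f$. *)

theory Defs
  imports "HOL-Analysis.Analysis"
begin

definition metric_tree :: "'a::euclidean_space set \<Rightarrow> 'a set \<Rightarrow> ('a \<times> 'a) set \<Rightarrow> bool" where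
  "metric_tree \<Gamma> V E \<longleftrightarrow>
     finite V \<and> V \<noteq> {} \<and> E \<subseteq> V \<times> V \<and> (\<forall>(a,b)\<in>E. a \<noteq> b) \<and>
     \<Gamma> = V \<union> (\<Union>(a,b)\<in>E. closed_segment a b) \<and>
     (\<forall>(a,b)\<in>E. open_segment a b \<inter> V = {}) \<and>
     (\<forall>e\<in>E. \<forall>e'\<in>E. e \<noteq> e' \<longrightarrow>
        open_segment (fst e) (snd e) \<inter> closed_segment (fst e') (snd e') = {}) \<and>
     contractible \<Gamma>"

definition edge_linear :: "('a::euclidean_space \<times> 'a) set \<Rightarrow> ('a \<Rightarrow> real) \<Rightarrow> bool" where
  "edge_linear E u \<longleftrightarrow>
     (\<forall>(a,b)\<in>E. \<forall>t\<in>{0..1}. u ((1 - t) *\<^sub>R a + t *\<^sub>R b) = (1 - t) * u a + t * u b)"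

definition unimodal :: "'a::euclidean_space set \<Rightarrow> ('a \<Rightarrow> real) \<Rightarrow> bool" where
  "unimodal \<Gamma> u \<longleftrightarrow>
     continuous_on \<Gamma> u \<and> (\<forall>x\<in>\<Gamma>. 0 \<le> u x) \<and>
     (\<exists>M. (\<exists>x\<in>\<Gamma>. u x = M) \<and> (\<forall>x\<in>\<Gamma>. u x \<le> M) \<and>
          (\<forall>c. 0 < c \<and> c \<le> M \<longrightarrow> contractible {x\<in>\<Gamma>. c \<le> u x}) \<and>
          (\<forall>c. M < c \<longrightarrow> {x\<in>\<Gamma>. c \<le> u x} = {}))"

end

theory Submission
  imports Defs
begin


definition tau :: "'a::euclidean_space \<Rightarrow> 'a \<Rightarrow> 'a \<Rightarrow> real" where
  "tau a b x = inner (x - a) (b - a) / inner (b - a) (b - a)"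

lemma tau_point:
  assumes "a \<noteq> b" shows "tau a b ((1 - t) *\<^sub>R a + t *\<^sub>R b) = t"
proof -
  have "(1 - t) *\<^sub>R a + t *\<^sub>R b - a = t *\<^sub>R (b - a)" by (simp add: algebra_simps)
  moreover have "inner (b - a) (b - a) \<noteq> 0" using assms by simp
  ultimately show ?thesis by (simp add: tau_def)
qed

lemma tau_a [simp]: "tau a b a = 0" by (simp add: tau_def)
lemma tau_b: "a \<noteq> b \<Longrightarrow> tau a b b = 1" by (simp add: tau_def)

lemma seg_tau:
  assumes "a \<noteq> b" "x \<in> closed_segment a b"
  shows "x = (1 - tau a b x) *\<^sub>R a + tau a b x *\<^sub>R b" "0 \<le> tau a b x" "tau a b x \<le> 1"
proof -
  obtain u where u: "0 \<le> u" "u \<le> 1" "x = (1 - u) *\<^sub>R a + u *\<^sub>R b" using assms(2) by (auto simp: in_segment)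
  have "tau a b x = u" using u(3) tau_point[OF assms(1)] by simp
  then show "x = (1 - tau a b x) *\<^sub>R a + tau a b x *\<^sub>R b" "0 \<le> tau a b x" "tau a b x \<le> 1" using u by auto
qed

lemma cont_tau: "continuous_on S (tau a b)"
  unfolding tau_def divide_inverse by (intro continuous_intros)

lemma seg_tau_inj:
  assumes "a \<noteq> b" "x \<in> closed_segment a b" "y \<in> closed_segment a b" "tau a b x = tau a b y"
  shows "x = y"
  using seg_tau(1)[OF assms(1,2)] seg_tau(1)[OF assms(1,3)] assms(4) by metis

locale mtree =
  fixes \<Gamma> :: "'a::euclidean_space set" and V :: "'a set" and E :: "('a \<times> 'a) set"
  assumes mt: "metric_tree \<Gamma> V E"
begin

lemma finV: "finite V" using mt by (simp add: metric_tree_def)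
lemma finE: "finite E"
proof -
  have "E \<subseteq> V \<times> V" using mt by (simp add: metric_tree_def)
  then show ?thesis using finV finite_subset by blast
qed
lemma Vne: "V \<noteq> {}" using mt by (simp add: metric_tree_def)
lemma ends: "(a,b) \<in> E \<Longrightarrow> a \<in> V \<and> b \<in> V \<and> a \<noteq> b" using mt by (auto simp: metric_tree_def)
lemma Gam: "\<Gamma> = V \<union> (\<Union>(a,b)\<in>E. closed_segment a b)" using mt by (simp add: metric_tree_def)
lemma VG: "V \<subseteq> \<Gamma>" using Gam by blast
lemma segG: "(a,b) \<in> E \<Longrightarrow> closed_segment a b \<subseteq> \<Gamma>" using Gam by blast
lemma openV: "(a,b) \<in> E \<Longrightarrow> x \<in> open_segment a b \<Longrightarrow> x \<notin> V"
  using mt unfolding metric_tree_def by blast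
lemma uniq: "e \<in> E \<Longrightarrow> e' \<in> E \<Longrightarrow> x \<in> open_segment (fst e) (snd e) \<Longrightarrow> x \<in> closed_segment (fst e') (snd e') \<Longrightarrow> e = e'"
  using mt unfolding metric_tree_def by blast
lemma contrG: "contractible \<Gamma>" using mt unfolding metric_tree_def by blast

lemma Gam_cases:
  assumes "x \<in> \<Gamma>"
  obtains "x \<in> V" | a b where "(a,b) \<in> E" "x \<in> open_segment a b"
proof -
  have "x \<in> V \<or> (\<exists>(a,b)\<in>E. x \<in> closed_segment a b)" using assms Gam by blast
  then show ?thesis
  proof
    assume "\<exists>(a,b)\<in>E. x \<in> closed_segment a b"
    then obtain a b where ab: "(a,b) \<in> E" "x \<in> closed_segment a b" by blast
    show ?thesis
    proof (cases "x \<in> {a,b}")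
      case True then show ?thesis using ab ends that by blast
    next
      case False then show ?thesis using ab that by (auto simp: open_segment_def)
    qed
  qed (use that in blast)
qed

definition Rest :: "'a \<times> 'a \<Rightarrow> 'a set" where
  "Rest e = V \<union> (\<Union>e'\<in>E - {e}. closed_segment (fst e') (snd e'))"

lemma Rest_closed: "closed (Rest e)"
  unfolding Rest_def using finV finE by (intro closed_Un closed_UN finite_imp_closed) auto

lemma Gam_split: "(a,b) \<in> E \<Longrightarrow> \<Gamma> = closed_segment a b \<union> Rest (a,b)"
  unfolding Rest_def using Gam by force

lemma seg_Rest: assumes "(a,b) \<in> E" shows "closed_segment a b \<inter> Rest (a,b) \<subseteq> {a,b}"
proof
  fix x assume x: "x \<in> closed_segment a b \<inter> Rest (a,b)"
  show "x \<in> {a,b}"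
  proof (rule ccontr)
    assume "x \<notin> {a,b}"
    then have xo: "x \<in> open_segment a b" using x by (auto simp: open_segment_def)
    then have "x \<notin> V" using openV assms by blast
    then obtain e' where "e' \<in> E - {(a,b)}" "x \<in> closed_segment (fst e') (snd e')" using x by (auto simp: Rest_def)
    then show False using uniq[of "(a,b)" e' x] xo assms by auto
  qed
qed

end


definition ex :: "real \<Rightarrow> complex" where "ex t = exp (2 * of_real pi * \<i> * of_real t)"

lemma ex0 [simp]: "ex 0 = 1" by (simp add: ex_def)
lemma ex1 [simp]: "ex 1 = 1" by (simp add: ex_def)
lemma ex_m1: "ex (t - 1) = ex t"
proof -
  have "2 * of_real pi * \<i> * of_real (t - 1) = 2 * of_real pi * \<i> * of_real t - 2 * of_real pi * \<i>"
    by (simp add: algebra_simps)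
  then show ?thesis unfolding ex_def by (simp add: exp_diff)
qed
lemma ex_nz [simp]: "ex t \<noteq> 0" by (simp add: ex_def)
lemma cont_ex: "continuous_on S g \<Longrightarrow> continuous_on S (\<lambda>x. ex (g x))"
  unfolding ex_def by (intro continuous_intros) auto

lemma exp1_const:
  fixes F :: "'a::topological_space \<Rightarrow> complex"
  assumes S: "connected S" and cont: "continuous_on S F" and e1: "\<forall>x\<in>S. exp (F x) = 1"
    and xy: "x \<in> S" "y \<in> S"
  shows "F x = F y"
proof -
  have "F constant_on S"
  proof (rule continuous_discrete_range_constant[OF S cont])
    fix x assume x: "x \<in> S"
    show "\<exists>e>0. \<forall>y. y \<in> S \<and> F y \<noteq> F x \<longrightarrow> e \<le> norm (F y - F x)"
    proof (intro exI[of _ "2*pi"] conjI allI impI)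
      show "0 < 2*pi" by simp
      fix y assume y: "y \<in> S \<and> F y \<noteq> F x"
      show "2*pi \<le> norm (F y - F x)"
      proof (rule ccontr)
        assume "\<not> 2*pi \<le> norm (F y - F x)"
        then have "\<bar>Im (F y) - Im (F x)\<bar> < 2*pi" using abs_Im_le_cmod [of "F y - F x"] by auto
        moreover have "exp (F y) = exp (F x)" using e1 x y by simp
        ultimately have "F y = F x" by (rule exp_complex_eqI)
        then show False using y by simp
      qed
    qed
  qed
  then show ?thesis using xy by (auto simp: constant_on_def)
qed

context mtree begin

lemma sep1:
  assumes e: "(a,b) \<in> E" and C: "C \<subseteq> \<Gamma>" "connected C" "a \<notin> C" "b \<notin> C"
    and x: "x \<in> C" "x \<in> closed_segment a b" and y: "y \<in> C" "y \<notin> closed_segment a b"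
  shows False
proof -
  have "C \<subseteq> closed_segment a b \<union> Rest (a,b)" using Gam_split[OF e] C by blast
  moreover have "closed_segment a b \<inter> Rest (a,b) \<inter> C = {}" using seg_Rest[OF e] C by blast
  moreover have "closed_segment a b \<inter> C \<noteq> {}" using x by blast
  moreover have "Rest (a,b) \<inter> C \<noteq> {}" using y C Gam_split[OF e] by blast
  ultimately show False using C(2) Rest_closed unfolding connected_closed
    by (meson closed_segment)
qed

lemma sep2:
  assumes e: "(a,b) \<in> E" and C: "C \<subseteq> \<Gamma>" "closed C" "connected C" "a \<in> C" "b \<in> C"
  shows "closed_segment a b \<subseteq> C"
proof (rule ccontr)
  assume "\<not> closed_segment a b \<subseteq> C"
  then obtain z where z: "z \<in> closed_segment a b" "z \<notin> C" by blast
  have ab: "a \<noteq> b" using ends e by blast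
  define s where "s = tau a b z"
  have s01: "0 \<le> s" "s \<le> 1" using seg_tau[OF ab z(1)] s_def by auto
  have "s \<noteq> 0"
  proof
    assume "s = 0" then have "z = a" using seg_tau(1)[OF ab z(1)] s_def by simp
    then show False using z C by simp
  qed
  have "s \<noteq> 1"
  proof
    assume "s = 1" then have "z = b" using seg_tau(1)[OF ab z(1)] s_def by simp
    then show False using z C by simp
  qed
  obtain \<epsilon> where \<epsilon>: "\<epsilon> > 0" "ball z \<epsilon> \<subseteq> - C"
    using C(2) z(2) unfolding closed_def open_contains_ball by blast
  have distC: "\<epsilon> \<le> dist x z" if "x \<in> C" for x
    using \<epsilon>(2) that by (force simp: dist_commute)
  define h where "h x = (if x \<in> closed_segment a b then ex (tau a b x) else 1)" for x
  have conth: "continuous_on \<Gamma> h"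
  proof -
    have "continuous_on (closed_segment a b) h"
      by (rule continuous_on_eq[of _ "\<lambda>x. ex (tau a b x)"]) (auto simp: h_def intro: cont_ex cont_tau)
    moreover have "continuous_on (Rest (a,b)) h"
    proof (rule continuous_on_eq[of _ "\<lambda>x. 1"])
      fix x assume "x \<in> Rest (a,b)"
      then show "1 = h x" using seg_Rest[OF e] tau_b[OF ab] by (auto simp: h_def)
    qed simp
    ultimately show ?thesis using Gam_split[OF e] Rest_closed
      by (metis closed_segment continuous_on_closed_Un)
  qed
  have "Borsukian \<Gamma>" using contrG by (rule contractible_imp_Borsukian)
  moreover have "h \<in> \<Gamma> \<rightarrow> - {0}" by (auto simp: h_def)
  ultimately obtain L where L: "continuous_on \<Gamma> L" "\<forall>x\<in>\<Gamma>. h x = exp (L x)"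
    using conth unfolding Borsukian_continuous_logarithm by blast
  have aG: "a \<in> \<Gamma>" "b \<in> \<Gamma>" using C by auto
  have "L a - 2 * of_real pi * \<i> * of_real (tau a b a) = L b - 2 * of_real pi * \<i> * of_real (tau a b b)"
  proof (rule exp1_const[of "closed_segment a b" "\<lambda>x. L x - 2 * of_real pi * \<i> * of_real (tau a b x)" a b, OF connected_segment _ _ ends_in_segment(1) ends_in_segment(2)])
    show "continuous_on (closed_segment a b) (\<lambda>x. L x - 2 * of_real pi * \<i> * of_real (tau a b x))"
      using L(1) segG[OF e] by (intro continuous_intros cont_tau continuous_on_subset[OF L(1)]) auto
    show "\<forall>x\<in>closed_segment a b. exp (L x - 2 * complex_of_real pi * \<i> * complex_of_real (tau a b x)) = 1"
    proof
      fix x assume x: "x \<in> closed_segment a b"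
      then have "x \<in> \<Gamma>" using segG[OF e] by blast
      then have "h x = exp (L x)" using L(2) by blast
      then have "ex (tau a b x) = exp (L x)" using x by (simp add: h_def)
      then show "exp (L x - 2 * complex_of_real pi * \<i> * complex_of_real (tau a b x)) = 1"
        by (simp add: exp_diff ex_def)
    qed
  qed
  then have L1: "L b = L a + 2 * of_real pi * \<i>" using tau_b[OF ab] by simp
  define A where "A = closed_segment a b \<inter> {x. tau a b x \<le> s} \<inter> {x. \<epsilon> \<le> dist x z}"
  define B where "B = closed_segment a b \<inter> {x. s \<le> tau a b x} \<inter> {x. \<epsilon> \<le> dist x z}"
  have clA: "closed A" unfolding A_def
    by (intro closed_Int closed_segment closed_Collect_le cont_tau continuous_intros)
  have clB: "closed B" unfolding B_def
    by (intro closed_Int closed_segment closed_Collect_le cont_tau continuous_intros)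
  have AB: "A \<inter> B = {}"
  proof (rule ccontr)
    assume "A \<inter> B \<noteq> {}"
    then obtain x where x: "x \<in> A" "x \<in> B" by blast
    then have "x = z" using seg_tau_inj[OF ab _ z(1)] s_def by (auto simp: A_def B_def)
    then show False using x \<epsilon>(1) by (auto simp: A_def)
  qed
  define th where "th x = (if x \<in> A then tau a b x else if x \<in> B then tau a b x - 1 else 0)" for x
  have contth: "continuous_on (A \<union> B \<union> Rest (a,b)) th"
  proof -
    have "continuous_on A th"
      by (rule continuous_on_eq[of _ "tau a b"]) (auto simp: th_def cont_tau)
    moreover have "continuous_on B th"
      by (rule continuous_on_eq[of _ "\<lambda>x. tau a b x - 1"]) (use AB in \<open>auto simp: th_def intro!: continuous_intros cont_tau\<close>)
    moreover have "continuous_on (Rest (a,b)) th"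
    proof (rule continuous_on_eq[of _ "\<lambda>x. 0"])
      fix x assume x: "x \<in> Rest (a,b)"
      show "0 = th x"
      proof (cases "x \<in> A \<or> x \<in> B")
        case True
        then have "x \<in> {a,b}" using seg_Rest[OF e] x by (auto simp: A_def B_def)
        then show ?thesis using True tau_b[OF ab] \<open>s \<noteq> 0\<close> \<open>s \<noteq> 1\<close> s01 AB
          by (auto simp: th_def A_def B_def)
      qed (auto simp: th_def)
    qed simp
    ultimately show ?thesis using clA clB Rest_closed by (intro continuous_on_closed_Un closed_Un)
  qed
  have CAB: "C \<subseteq> A \<union> B \<union> Rest (a,b)"
  proof
    fix x assume x: "x \<in> C"
    show "x \<in> A \<union> B \<union> Rest (a,b)"
    proof (cases "x \<in> closed_segment a b")
      case True then show ?thesis using distC[OF x] by (auto simp: A_def B_def)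
    next
      case False then show ?thesis using x C Gam_split[OF e] by blast
    qed
  qed
  define D where "D x = L x - 2 * of_real pi * \<i> * of_real (th x)" for x
  have "D a = D b"
  proof (rule exp1_const[OF C(3) _ _ C(4) C(5)])
    show "continuous_on C D" unfolding D_def
      using C(1) CAB by (intro continuous_intros continuous_on_subset[OF L(1)] continuous_on_subset[OF contth]) auto
    show "\<forall>x\<in>C. exp (D x) = 1"
    proof
      fix x assume x: "x \<in> C"
      have hx: "h x = exp (L x)" using L(2) x C by auto
      have "exp (D x) = h x / ex (th x)" unfolding D_def ex_def by (simp add: exp_diff hx)
      also have "\<dots> = 1"
      proof (cases "x \<in> A")
        case True then show ?thesis by (auto simp: th_def h_def A_def)
      next
        case nA: False
        show ?thesis
        proof (cases "x \<in> B")
          case True then show ?thesis using nA by (auto simp: th_def h_def B_def ex_m1)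
        next
          case False
          then have "x \<notin> closed_segment a b" using nA x distC by (auto simp: A_def B_def)
          then show ?thesis using nA False by (auto simp: th_def h_def)
        qed
      qed
      finally show "exp (D x) = 1" .
    qed
  qed
  moreover have "th a = 0"
    using s01 \<open>s \<noteq> 0\<close> by (auto simp: th_def A_def B_def)
  moreover have "th b = 0"
    using tau_b[OF ab] s01 \<open>s \<noteq> 1\<close> by (auto simp: th_def A_def B_def)
  ultimately have "L a = L b" by (simp add: D_def)
  then show False using L1 by simp
qed

end


lemma AR_attach:
  fixes K :: "'a::euclidean_space set"
  assumes "finite F" "AR K" "closed K" "\<forall>P\<in>F. convex P \<and> closed P"
    "\<forall>P\<in>F. \<exists>a\<in>K. a \<in> P \<and> P \<inter> (K \<union> \<Union>(F - {P})) \<subseteq> {a}"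
  shows "AR (K \<union> \<Union>F)"
  using assms
proof (induction F rule: finite_induct)
  case empty then show ?case by simp
next
  case (insert P F)
  have h: "\<forall>P'\<in>F. \<exists>a\<in>K. a \<in> P' \<and> P' \<inter> (K \<union> \<Union>(F - {P'})) \<subseteq> {a}"
  proof
    fix P' assume P': "P' \<in> F"
    then obtain a where a: "a \<in> K" "a \<in> P'" "P' \<inter> (K \<union> \<Union>(insert P F - {P'})) \<subseteq> {a}"
      using insert.prems(4) by blast
    have "P' \<inter> (K \<union> \<Union>(F - {P'})) \<subseteq> P' \<inter> (K \<union> \<Union>(insert P F - {P'}))" by blast
    then show "\<exists>a\<in>K. a \<in> P' \<and> P' \<inter> (K \<union> \<Union>(F - {P'})) \<subseteq> {a}" using a by blast
  qed
  have AR1: "AR (K \<union> \<Union>F)" using insert h by simp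
  have cl1: "closed (K \<union> \<Union>F)" using insert by (intro closed_Un closed_Union) auto
  obtain a where a: "a \<in> K" "a \<in> P" "P \<inter> (K \<union> \<Union>(insert P F - {P})) \<subseteq> {a}"
    using insert.prems(4) by blast
  have "insert P F - {P} = F" using insert.hyps(2) by blast
  then have int: "(K \<union> \<Union>F) \<inter> P = {a}" using a by blast
  have clP: "closed P" and cvP: "convex P" using insert.prems(3) by auto
  have ARP: "AR P" using cvP a(2) by (intro convex_imp_AR) auto
  have "AR ((K \<union> \<Union>F) \<union> P)"
    by (rule AR_closed_Un_local) (auto intro: closed_subset cl1 clP AR1 ARP simp: int AR_singleton)
  moreover have "K \<union> \<Union>(insert P F) = (K \<union> \<Union>F) \<union> P" by blast
  ultimately show ?case by simp
qed

context mtree begin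

definition interp :: "('a \<Rightarrow> real) \<Rightarrow> 'a \<Rightarrow> real" where
  "interp u x = (if x \<in> V then u x else
     if (\<exists>e\<in>E. x \<in> open_segment (fst e) (snd e)) then
       (let e = (SOME e. e \<in> E \<and> x \<in> open_segment (fst e) (snd e)) in
         (1 - tau (fst e) (snd e) x) * u (fst e) + tau (fst e) (snd e) x * u (snd e))
     else 0)"

lemma interp_V: "x \<in> V \<Longrightarrow> interp u x = u x" by (simp add: interp_def)

lemma interp_seg:
  assumes e: "(a,b) \<in> E" and x: "x \<in> closed_segment a b"
  shows "interp u x = (1 - tau a b x) * u a + tau a b x * u b"
proof -
  have ab: "a \<in> V" "b \<in> V" "a \<noteq> b" using ends[OF e] by auto
  consider "x = a" | "x = b" | "x \<in> open_segment a b" using x by (auto simp: open_segment_def)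
  then show ?thesis
  proof cases
    case 1 then show ?thesis using ab by (simp add: interp_V)
  next
    case 2 then show ?thesis using ab by (simp add: interp_V tau_b)
  next
    case 3
    then have xV: "x \<notin> V" using openV[OF e] by blast
    have ex: "\<exists>e\<in>E. x \<in> open_segment (fst e) (snd e)" using 3 e by force
    have "(SOME e. e \<in> E \<and> x \<in> open_segment (fst e) (snd e)) = (a,b)"
    proof (rule some_equality)
      show "(a,b) \<in> E \<and> x \<in> open_segment (fst (a,b)) (snd (a,b))" using 3 e by simp
      fix e' assume "e' \<in> E \<and> x \<in> open_segment (fst e') (snd e')"
      then show "e' = (a,b)" using uniq[of e' "(a,b)" x] e x by auto
    qed
    then show ?thesis using xV ex by (simp add: interp_def Let_def)
  qed
qed

lemma interp_edge_linear: "edge_linear E (interp u)"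
  unfolding edge_linear_def
proof (clarify)
  fix a b t assume e: "(a,b) \<in> E" and t: "t \<in> {0..(1::real)}"
  have ab: "a \<in> V" "b \<in> V" "a \<noteq> b" using ends[OF e] by auto
  have x: "(1 - t) *\<^sub>R a + t *\<^sub>R b \<in> closed_segment a b" using t by (auto simp: in_segment)
  show "interp u ((1 - t) *\<^sub>R a + t *\<^sub>R b) = (1 - t) * interp u a + t * interp u b"
    using interp_seg[OF e x] tau_point[OF ab(3)] ab by (simp add: interp_V)
qed

lemma Gam_U: "\<Gamma> = V \<union> (\<Union>e\<in>E. closed_segment (fst e) (snd e))"
  using Gam by auto

lemma interp_cont: "continuous_on \<Gamma> (interp u)"
proof -
  have c1: "continuous_on V (interp u)" using finV by (rule continuous_on_finite)
  have c2: "continuous_on (\<Union>e\<in>E. closed_segment (fst e) (snd e)) (interp u)"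
  proof (rule continuous_on_closed_Union[OF finE])
    fix e assume e: "e \<in> E"
    obtain a b where eab: "e = (a,b)" by fastforce
    show "closed (closed_segment (fst e) (snd e))" by simp
    have cc: "continuous_on (closed_segment a b) (\<lambda>x. (1 - tau a b x) * u a + tau a b x * u b)"
      by (intro continuous_intros cont_tau)
    have "continuous_on (closed_segment a b) (interp u)"
    proof (rule continuous_on_eq[OF cc])
      fix x assume "x \<in> closed_segment a b"
      then show "(1 - tau a b x) * u a + tau a b x * u b = interp u x"
        using interp_seg[of a b x u] e eab by simp
    qed
    then show "continuous_on (closed_segment (fst e) (snd e)) (interp u)" using eab by simp
  qed
  have cl1: "closed V" using finV by (rule finite_imp_closed)
  have cl2: "closed (\<Union>e\<in>E. closed_segment (fst e) (snd e))"
    using finE by (intro closed_UN) auto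
  show ?thesis unfolding Gam_U using continuous_on_closed_Un[OF cl1 cl2 c1 c2] .
qed

lemma interp_sum:
  fixes us :: "'i \<Rightarrow> 'a \<Rightarrow> real"
  assumes fin: "finite I" and el: "edge_linear E f" and fV: "\<forall>v\<in>V. f v = (\<Sum>\<alpha>\<in>I. us \<alpha> v)"
    and x: "x \<in> \<Gamma>"
  shows "f x = (\<Sum>\<alpha>\<in>I. interp (us \<alpha>) x)"
  using x
proof (cases rule: Gam_cases)
  case 1 then show ?thesis using fV by (simp add: interp_V)
next
  case (2 a b)
  have ab: "a \<in> V" "b \<in> V" "a \<noteq> b" using ends[OF 2(1)] by auto
  have xs: "x \<in> closed_segment a b" using 2(2) by (auto simp: open_segment_def)
  note st = seg_tau[OF ab(3) xs]
  have "\<forall>t\<in>{0..1}. f ((1 - t) *\<^sub>R a + t *\<^sub>R b) = (1 - t) * f a + t * f b"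
    using el 2(1) unfolding edge_linear_def by blast
  then have "f ((1 - tau a b x) *\<^sub>R a + tau a b x *\<^sub>R b) = (1 - tau a b x) * f a + tau a b x * f b"
    using st(2,3) by simp
  then have "f x = (1 - tau a b x) * f a + tau a b x * f b"
    using st(1) by simp
  also have "\<dots> = (\<Sum>\<alpha>\<in>I. (1 - tau a b x) * us \<alpha> a + tau a b x * us \<alpha> b)"
    using fV ab by (simp add: sum.distrib sum_distrib_left)
  also have "\<dots> = (\<Sum>\<alpha>\<in>I. interp (us \<alpha>) x)"
    using interp_seg[OF 2(1) xs] by simp
  finally show ?thesis .
qed

end


lemma cc_le: "0 \<le> (t::real) \<Longrightarrow> t \<le> 1 \<Longrightarrow> A \<le> m \<Longrightarrow> B \<le> m \<Longrightarrow> (1 - t) * A + t * B \<le> m"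
proof -
  assume h: "0 \<le> t" "t \<le> 1" "A \<le> m" "B \<le> m"
  have "(1 - t) * A \<le> (1 - t) * m" using h by (intro mult_left_mono) auto
  moreover have "t * B \<le> t * m" using h by (intro mult_left_mono) auto
  ultimately show ?thesis by (simp add: algebra_simps)
qed

lemma cc_ge: "0 \<le> (t::real) \<Longrightarrow> t \<le> 1 \<Longrightarrow> m \<le> A \<Longrightarrow> m \<le> B \<Longrightarrow> m \<le> (1 - t) * A + t * B"
proof -
  assume h: "0 \<le> t" "t \<le> 1" "m \<le> A" "m \<le> B"
  have "(1 - t) * m \<le> (1 - t) * A" using h by (intro mult_left_mono) auto
  moreover have "t * m \<le> t * B" using h by (intro mult_left_mono) auto
  ultimately show ?thesis by (simp add: algebra_simps)
qed

lemma cc_lt: "0 \<le> (t::real) \<Longrightarrow> t \<le> 1 \<Longrightarrow> A < m \<Longrightarrow> B < m \<Longrightarrow> (1 - t) * A + t * B < m"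
proof -
  assume h: "0 \<le> t" "t \<le> 1" "A < m" "B < m"
  show ?thesis
  proof (cases "t = 0")
    case True then show ?thesis using h by simp
  next
    case False
    have "(1 - t) * A \<le> (1 - t) * m" using h by (intro mult_left_mono) auto
    moreover have "t * B < t * m" using h False by (intro mult_strict_left_mono) auto
    ultimately show ?thesis by (simp add: algebra_simps)
  qed
qed

lemma tau_affine:
  assumes "s + t = 1"
  shows "tau a b (s *\<^sub>R x + t *\<^sub>R y) = s * tau a b x + t * tau a b y"
proof -
  have "s *\<^sub>R x + t *\<^sub>R y - a = s *\<^sub>R (x - a) + t *\<^sub>R (y - a)"
    using assms by (simp add: algebra_simps) (metis add_diff_cancel_left' scaleR_add_left scaleR_one diff_add_cancel add.commute)
  then show ?thesis unfolding tau_def by (simp add: inner_add_left add_divide_distrib)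
qed

lemma convex_affine_ge:
  "convex {x. c \<le> (1 - tau a b x) * A + tau a b x * B}"
  unfolding convex_def
proof (clarify)
  fix x y :: 'a and s t :: real
  assume h: "c \<le> (1 - tau a b x) * A + tau a b x * B" "c \<le> (1 - tau a b y) * A + tau a b y * B"
    "0 \<le> s" "0 \<le> t" "s + t = 1"
  have eq: "(1 - tau a b (s *\<^sub>R x + t *\<^sub>R y)) * A + tau a b (s *\<^sub>R x + t *\<^sub>R y) * B
      = s * ((1 - tau a b x) * A + tau a b x * B) + t * ((1 - tau a b y) * A + tau a b y * B)"
  proof -
    have s: "s = 1 - t" using h(5) by simp
    show ?thesis unfolding tau_affine[OF h(5)] by (simp add: s algebra_simps)
  qed
  have "s * c \<le> s * ((1 - tau a b x) * A + tau a b x * B)" using h by (intro mult_left_mono) auto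
  moreover have "t * c \<le> t * ((1 - tau a b y) * A + tau a b y * B)" using h by (intro mult_left_mono) auto
  ultimately have "(s + t) * c \<le> s * ((1 - tau a b x) * A + tau a b x * B) + t * ((1 - tau a b y) * A + tau a b y * B)"
    by (simp add: distrib_right)
  then show "c \<le> (1 - tau a b (s *\<^sub>R x + t *\<^sub>R y)) * A + tau a b (s *\<^sub>R x + t *\<^sub>R y) * B"
    using eq h(5) by simp
qed



context mtree begin

lemma seg_cases:
  assumes e: "e \<in> E" and x: "x \<in> closed_segment (fst e) (snd e)"
  shows "x = fst e \<or> x = snd e \<or> (x \<notin> V \<and> (\<forall>e'\<in>E. x \<in> closed_segment (fst e') (snd e') \<longrightarrow> e' = e))"
proof (cases "x \<in> {fst e, snd e}")
  case True then show ?thesis by auto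
next
  case False
  then have xo: "x \<in> open_segment (fst e) (snd e)" using x by (auto simp: open_segment_def)
  have "x \<notin> V" using openV[of "fst e" "snd e" x] e xo by auto
  moreover have "\<forall>e'\<in>E. x \<in> closed_segment (fst e') (snd e') \<longrightarrow> e' = e"
    using uniq[of e _ x] e xo by blast
  ultimately show ?thesis by blast
qed

lemma closedG: "closed \<Gamma>"
  unfolding Gam_U using finV finE by (intro closed_Un finite_imp_closed closed_UN) auto

lemma interp_seg':
  assumes "e \<in> E" "x \<in> closed_segment (fst e) (snd e)"
  shows "interp u x = (1 - tau (fst e) (snd e) x) * u (fst e) + tau (fst e) (snd e) x * u (snd e)"
  using interp_seg[of "fst e" "snd e" x u] assms by simp

lemma tau01:
  assumes "e \<in> E" "x \<in> closed_segment (fst e) (snd e)"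
  shows "0 \<le> tau (fst e) (snd e) x" "tau (fst e) (snd e) x \<le> 1"
proof -
  have "fst e \<noteq> snd e" using ends[of "fst e" "snd e"] assms(1) by simp
  then show "0 \<le> tau (fst e) (snd e) x" "tau (fst e) (snd e) x \<le> 1" using seg_tau(2,3) assms(2) by auto
qed

lemma endsV: "e \<in> E \<Longrightarrow> fst e \<in> V \<and> snd e \<in> V" using ends[of "fst e" "snd e"] by simp

lemma T_contractible:
  assumes cont: "continuous_on \<Gamma> u"
    and Sc: "contractible {x\<in>\<Gamma>. c \<le> u x}"
    and Vex: "\<exists>v\<in>V. c \<le> u v"
  shows "contractible {x\<in>\<Gamma>. c \<le> interp u x}"
proof -
  define Vc where "Vc = {v\<in>V. c \<le> u v}"
  define S where "S = {x\<in>\<Gamma>. c \<le> u x}"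
  define Ef where "Ef = {e\<in>E. fst e \<in> Vc \<and> snd e \<in> Vc}"
  define Dg where "Dg = {e\<in>E. (fst e \<in> Vc) \<noteq> (snd e \<in> Vc)}"
  define att where "att e = (if fst e \<in> Vc then fst e else snd e)" for e
  define sg where "sg e = closed_segment (fst e) (snd e)" for e :: "'a \<times> 'a"
  define K where "K = Vc \<union> (\<Union>e\<in>Ef. sg e)"
  define P where "P e = {x \<in> sg e. c \<le> interp u x}" for e
  have finVc: "finite Vc" using finV by (simp add: Vc_def)
  have finEf: "finite Ef" using finE by (simp add: Ef_def)
  have finDg: "finite Dg" using finE by (simp add: Dg_def)
  have VcV: "Vc \<subseteq> V" by (auto simp: Vc_def)
  have VcS: "Vc \<subseteq> S" using VG by (auto simp: Vc_def S_def)
  have SV: "x \<in> S \<Longrightarrow> x \<in> V \<Longrightarrow> x \<in> Vc" for x by (auto simp: Vc_def S_def)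
  have Vcne: "Vc \<noteq> {}" using Vex by (auto simp: Vc_def)
  have SG: "S \<subseteq> \<Gamma>" by (auto simp: S_def)
  have "S = \<Gamma> \<inter> u -` {c..}" by (auto simp: S_def)
  then have clS: "closed S" using continuous_closed_preimage[OF cont closedG closed_atLeast] by simp
  have cS: "contractible S" using Sc by (simp add: S_def)
  then have conS: "connected S" by (rule contractible_imp_connected)
  have attVc: "att e \<in> Vc" if "e \<in> Dg" for e using that by (auto simp: att_def Dg_def)
  have att_seg: "att e \<in> sg e" for e by (auto simp: att_def sg_def)
  have endVc_att: "x = att e" if "e \<in> Dg" "x = fst e \<or> x = snd e" "x \<in> Vc" for e x
    using that by (auto simp: att_def Dg_def)
  have DgE: "Dg \<subseteq> E" and EfE: "Ef \<subseteq> E" by (auto simp: Dg_def Ef_def)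
  have DgEf: "e \<in> Dg \<Longrightarrow> e \<notin> Ef" for e by (auto simp: Dg_def Ef_def)
  have clK: "closed K" unfolding K_def sg_def using finVc finEf
    by (intro closed_Un finite_imp_closed closed_UN) auto
  have KS: "K \<subseteq> S"
  proof -
    have "sg e \<subseteq> S" if e: "e \<in> Ef" for e
    proof -
      have "(fst e, snd e) \<in> E" using e EfE by auto
      moreover have "fst e \<in> S" "snd e \<in> S" using e VcS by (auto simp: Ef_def)
      ultimately show ?thesis unfolding sg_def using sep2[OF _ SG clS conS] by blast
    qed
    then show ?thesis using VcS by (auto simp: K_def)
  qed
  have cover: "S \<subseteq> K \<union> (\<Union>e\<in>Dg. S \<inter> sg e)"
  proof
    fix x assume xS: "x \<in> S"
    then have "x \<in> \<Gamma>" using SG by blast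
    then show "x \<in> K \<union> (\<Union>e\<in>Dg. S \<inter> sg e)"
    proof (cases rule: Gam_cases)
      case 1 then show ?thesis using SV xS by (auto simp: K_def)
    next
      case (2 a b)
      have xs: "x \<in> closed_segment a b" using 2(2) by (auto simp: open_segment_def)
      have abV: "a \<in> V" "b \<in> V" using ends[OF 2(1)] by auto
      consider "a \<in> Vc" "b \<in> Vc" | "(a \<in> Vc) \<noteq> (b \<in> Vc)" | "a \<notin> Vc" "b \<notin> Vc" by blast
      then show ?thesis
      proof cases
        case 1 then have "(a,b) \<in> Ef" using 2(1) by (auto simp: Ef_def)
        moreover have "x \<in> sg (a,b)" using xs by (simp add: sg_def)
        ultimately have "x \<in> K" unfolding K_def by blast
        then show ?thesis by blast
      next
        case 3
        obtain v where v: "v \<in> Vc" using Vcne by blast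
        have "v \<notin> closed_segment a b"
        proof
          assume "v \<in> closed_segment a b"
          then have "v = a \<or> v = b \<or> v \<in> open_segment a b" by (auto simp: open_segment_def)
          then show False using 3 v openV[OF 2(1)] VcV by blast
        qed
        moreover have "a \<notin> S" "b \<notin> S" using SV abV 3 by auto
        ultimately have False using sep1[OF 2(1) SG conS _ _ xS xs, of v] v VcS by blast
        then show ?thesis ..
      next
        case 2
        then have "(a,b) \<in> Dg" using \<open>(a,b) \<in> E\<close> by (auto simp: Dg_def)
        moreover have "x \<in> S \<inter> sg (a,b)" using xs xS by (simp add: sg_def)
        ultimately show ?thesis by blast
      qed
    qed
  qed
  have Seq: "S = K \<union> (\<Union>e\<in>Dg. S \<inter> sg e)" using cover KS by blast
  have segcase: "x = fst e \<or> x = snd e \<or> (x \<notin> V \<and> (\<forall>e'\<in>E. x \<in> sg e' \<longrightarrow> e' = e))"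
    if "e \<in> E" "x \<in> sg e" for e x using seg_cases that by (simp add: sg_def)
  define r where "r x = (if x \<in> K then x else att (SOME e. e \<in> Dg \<and> x \<in> sg e))" for x
  have rDg: "r x = att e" if e: "e \<in> Dg" and x: "x \<in> S" "x \<in> sg e" for e x
  proof -
    from segcase[of e x] e x DgE
    consider "x = fst e \<or> x = snd e" | "x \<notin> V" "\<forall>e'\<in>E. x \<in> sg e' \<longrightarrow> e' = e" by blast
    then show ?thesis
    proof cases
      case 1
      then have "x \<in> V" using endsV[of e] e DgE by auto
      then have "x \<in> Vc" using SV x by blast
      then show ?thesis using endVc_att[OF e 1] by (auto simp: r_def K_def)
    next
      case 2
      have "x \<notin> K"
      proof
        assume "x \<in> K"
        then consider "x \<in> Vc" | e' where "e' \<in> Ef" "x \<in> sg e'" by (auto simp: K_def)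
        then show False
        proof cases
          case 1 then show False using 2 VcV by blast
        next
          case (2 e') then show False using \<open>\<forall>e'\<in>E. x \<in> sg e' \<longrightarrow> e' = e\<close> EfE DgEf e by blast
        qed
      qed
      moreover have "(SOME e. e \<in> Dg \<and> x \<in> sg e) = e"
        using 2 e x DgE by (intro some_equality) auto
      ultimately show ?thesis by (simp add: r_def)
    qed
  qed
  have retr: "K retract_of S"
    unfolding retract_of_def retraction_def
  proof (intro exI conjI)
    show "K \<subseteq> S" by (rule KS)
    show "\<forall>x\<in>K. r x = x" by (simp add: r_def)
    show "r \<in> S \<rightarrow> K"
    proof
      fix x assume x: "x \<in> S"
      show "r x \<in> K"
      proof (cases "x \<in> K")
        case True then show ?thesis by (simp add: r_def)
      next
        case False
        then obtain e where "e \<in> Dg" "x \<in> sg e" using cover x by blast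
        then show ?thesis using rDg x attVc by (auto simp: K_def)
      qed
    qed
    have c1: "continuous_on K r"
      by (rule continuous_on_eq[of _ id]) (auto simp: r_def)
    have c2: "continuous_on (\<Union>e\<in>Dg. S \<inter> sg e) r"
    proof (rule continuous_on_closed_Union[OF finDg])
      fix e assume e: "e \<in> Dg"
      show "closed (S \<inter> sg e)" using clS by (auto simp: sg_def)
      show "continuous_on (S \<inter> sg e) r"
        by (rule continuous_on_eq[of _ "\<lambda>x. att e"]) (use rDg e in auto)
    qed
    have cl2: "closed (\<Union>e\<in>Dg. S \<inter> sg e)" using finDg clS by (intro closed_UN) (auto simp: sg_def)
    show "continuous_on S r" using continuous_on_closed_Un[OF clK cl2 c1 c2] Seq by simp
  qed
  have cK: "contractible K" using retract_of_contractible[OF cS retr] .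
  have "ANR (\<Union>((\<lambda>v. {v}) ` Vc \<union> sg ` Ef))"
    using finVc finEf by (intro ANR_finite_Union_convex_closed) (auto simp: sg_def)
  moreover have "\<Union>((\<lambda>v. {v}) ` Vc \<union> sg ` Ef) = K" by (auto simp: K_def)
  ultimately have ANRK: "ANR K" by simp
  have ARK: "AR K" using ANRK cK Vcne by (auto simp: AR_ANR K_def)
  have gseg: "interp u x = (1 - tau (fst e) (snd e) x) * u (fst e) + tau (fst e) (snd e) x * u (snd e)"
    and t01: "0 \<le> tau (fst e) (snd e) x" "tau (fst e) (snd e) x \<le> 1"
    if "e \<in> E" "x \<in> sg e" for e x
    using interp_seg'[of e x u] tau01[of e x] that by (auto simp: sg_def)
  have sgG: "e \<in> E \<Longrightarrow> sg e \<subseteq> \<Gamma>" for e using segG[of "fst e" "snd e"] by (simp add: sg_def)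
  have Teq: "{x\<in>\<Gamma>. c \<le> interp u x} = K \<union> \<Union>(P ` Dg)"
  proof
    show "{x\<in>\<Gamma>. c \<le> interp u x} \<subseteq> K \<union> \<Union>(P ` Dg)"
    proof
      fix x assume xx: "x \<in> {x\<in>\<Gamma>. c \<le> interp u x}"
      then have xG: "x \<in> \<Gamma>" and cx: "c \<le> interp u x" by auto
      show "x \<in> K \<union> \<Union>(P ` Dg)"
        using xG
      proof (cases rule: Gam_cases)
        case 1 then show ?thesis using cx by (auto simp: interp_V K_def Vc_def)
      next
        case (2 a b)
        have xs: "x \<in> sg (a,b)" using 2(2) by (auto simp: open_segment_def sg_def)
        have abV: "a \<in> V" "b \<in> V" using ends[OF 2(1)] by auto
        note gx = gseg[OF 2(1) xs] and tt = t01[OF 2(1) xs]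
        consider "a \<in> Vc" "b \<in> Vc" | "(a \<in> Vc) \<noteq> (b \<in> Vc)" | "a \<notin> Vc" "b \<notin> Vc" by blast
        then show ?thesis
        proof cases
          case 1 then have "(a,b) \<in> Ef" using 2(1) by (auto simp: Ef_def)
          then show ?thesis using xs by (auto simp: K_def)
        next
          case 3
          then have "u a < c" "u b < c" using abV by (auto simp: Vc_def)
          then have "interp u x < c" using gx cc_lt[OF tt] by simp
          then show ?thesis using cx by simp
        next
          case 2
          then have "(a,b) \<in> Dg" using \<open>(a,b) \<in> E\<close> by (auto simp: Dg_def)
          then show ?thesis using xs cx by (auto simp: P_def)
        qed
      qed
    qed
    show "K \<union> \<Union>(P ` Dg) \<subseteq> {x\<in>\<Gamma>. c \<le> interp u x}"
    proof
      fix x assume x: "x \<in> K \<union> \<Union>(P ` Dg)"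
      then consider "x \<in> Vc" | e where "e \<in> Ef" "x \<in> sg e" | e where "e \<in> Dg" "x \<in> P e"
        by (auto simp: K_def)
      then show "x \<in> {x\<in>\<Gamma>. c \<le> interp u x}"
      proof cases
        case 1 then show ?thesis using VG VcV by (auto simp: interp_V Vc_def)
      next
        case (2 e)
        have eE: "e \<in> E" using 2 EfE by blast
        have "c \<le> u (fst e)" "c \<le> u (snd e)" using 2 by (auto simp: Ef_def Vc_def)
        then have "c \<le> interp u x" using gseg[OF eE 2(2)] cc_ge[OF t01[OF eE 2(2)]] by simp
        then show ?thesis using sgG[OF eE] 2 by auto
      next
        case (3 e)
        then show ?thesis using sgG[of e] DgE by (auto simp: P_def)
      qed
    qed
  qed
  have "AR (K \<union> \<Union>(P ` Dg))"
  proof (rule AR_attach[OF _ ARK clK])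
    show "finite (P ` Dg)" using finDg by simp
    show "\<forall>Q\<in>P ` Dg. convex Q \<and> closed Q"
    proof
      fix Q assume "Q \<in> P ` Dg"
      then obtain e where e: "e \<in> Dg" and Q: "Q = P e" by blast
      have eE: "e \<in> E" using e DgE by blast
      have "P e = sg e \<inter> {x. c \<le> (1 - tau (fst e) (snd e) x) * u (fst e) + tau (fst e) (snd e) x * u (snd e)}"
        using gseg[OF eE] by (auto simp: P_def)
      moreover have "convex (sg e \<inter> {x. c \<le> (1 - tau (fst e) (snd e) x) * u (fst e) + tau (fst e) (snd e) x * u (snd e)})"
        unfolding sg_def by (intro convex_Int convex_closed_segment convex_affine_ge)
      moreover have "closed (sg e \<inter> {x. c \<le> (1 - tau (fst e) (snd e) x) * u (fst e) + tau (fst e) (snd e) x * u (snd e)})"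
        unfolding sg_def by (intro closed_Int closed_segment closed_Collect_le continuous_intros cont_tau)
      ultimately show "convex Q \<and> closed Q" using Q by simp
    qed
    show "\<forall>Q\<in>P ` Dg. \<exists>a\<in>K. a \<in> Q \<and> Q \<inter> (K \<union> \<Union>(P ` Dg - {Q})) \<subseteq> {a}"
    proof
      fix Q assume "Q \<in> P ` Dg"
      then obtain e where e: "e \<in> Dg" and Q: "Q = P e" by blast
      have eE: "e \<in> E" using e DgE by blast
      have aK: "att e \<in> K" using attVc[OF e] by (auto simp: K_def)
      have aQ: "att e \<in> Q" using attVc[OF e] att_seg[of e] VcV by (auto simp: Q P_def interp_V Vc_def)
      have "Q \<inter> (K \<union> \<Union>(P ` Dg - {Q})) \<subseteq> {att e}"
      proof
        fix x assume x: "x \<in> Q \<inter> (K \<union> \<Union>(P ` Dg - {Q}))"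
        then have xs: "x \<in> sg e" and cx: "c \<le> interp u x" by (auto simp: Q P_def)
        from segcase[OF eE xs]
        consider "x = fst e \<or> x = snd e" | "x \<notin> V" "\<forall>e'\<in>E. x \<in> sg e' \<longrightarrow> e' = e" by blast
        then show "x \<in> {att e}"
        proof cases
          case 1
          then have "x \<in> V" using endsV[OF eE] by auto
          then have "x \<in> Vc" using cx by (auto simp: interp_V Vc_def)
          then show ?thesis using endVc_att[OF e 1] by simp
        next
          case 2
          have "x \<in> K \<or> (\<exists>e'\<in>Dg. P e' \<noteq> Q \<and> x \<in> P e')" using x by blast
          then show ?thesis
          proof
            assume "x \<in> K"
            then consider "x \<in> Vc" | e' where "e' \<in> Ef" "x \<in> sg e'" by (auto simp: K_def)
            then show ?thesis
            proof cases
              case 1 then show ?thesis using 2 VcV by blast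
            next
              case (2 e') then show ?thesis using \<open>\<forall>e'\<in>E. x \<in> sg e' \<longrightarrow> e' = e\<close> EfE DgEf e by blast
            qed
          next
            assume "\<exists>e'\<in>Dg. P e' \<noteq> Q \<and> x \<in> P e'"
            then obtain e' where "e' \<in> Dg" "P e' \<noteq> Q" "x \<in> sg e'" by (auto simp: P_def)
            then show ?thesis using 2 DgE Q by blast
          qed
        qed
      qed
      then show "\<exists>a\<in>K. a \<in> Q \<and> Q \<inter> (K \<union> \<Union>(P ` Dg - {Q})) \<subseteq> {a}" using aK aQ by blast
    qed
  qed
  then show ?thesis using Teq AR_imp_contractible by simp
qed

end


context mtree begin

lemma interp_unimodal:
  assumes um: "unimodal \<Gamma> u"
  shows "unimodal \<Gamma> (interp u)"
proof -
  obtain M where cont: "continuous_on \<Gamma> u" and nn: "\<forall>x\<in>\<Gamma>. 0 \<le> u x"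
    and M: "\<forall>x\<in>\<Gamma>. u x \<le> M" "\<forall>c. 0 < c \<and> c \<le> M \<longrightarrow> contractible {x\<in>\<Gamma>. c \<le> u x}"
    using um unfolding unimodal_def by blast
  define Mg where "Mg = Max (u ` V)"
  obtain v where v: "v \<in> V" "u v = Mg" unfolding Mg_def using finV Vne
    by (metis (no_types, lifting) Max_in finite_imageI image_iff image_is_empty)
  have leMg: "u w \<le> Mg" if "w \<in> V" for w unfolding Mg_def using finV that by simp
  have gb: "0 \<le> interp u x \<and> interp u x \<le> Mg" if x: "x \<in> \<Gamma>" for x
    using x
  proof (cases rule: Gam_cases)
    case 1 then show ?thesis using nn VG leMg by (auto simp: interp_V)
  next
    case (2 a b)
    have ab: "a \<in> V" "b \<in> V" "a \<noteq> b" using ends[OF 2(1)] by auto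
    have xs: "x \<in> closed_segment a b" using 2(2) by (auto simp: open_segment_def)
    note t = seg_tau(2,3)[OF ab(3) xs]
    have "0 \<le> u a" "0 \<le> u b" using nn VG ab by auto
    moreover have "u a \<le> Mg" "u b \<le> Mg" using leMg ab by auto
    ultimately show ?thesis using interp_seg[OF 2(1) xs, of u] cc_ge[OF t, of 0] cc_le[OF t, of _ Mg] by simp
  qed
  show ?thesis
    unfolding unimodal_def
  proof (intro conjI exI[of _ Mg])
    show "continuous_on \<Gamma> (interp u)" by (rule interp_cont)
    show "\<forall>x\<in>\<Gamma>. 0 \<le> interp u x" using gb by blast
    have "v \<in> \<Gamma>" "interp u v = Mg" using v VG by (auto simp: interp_V)
    then show "\<exists>x\<in>\<Gamma>. interp u x = Mg" by blast
    show "\<forall>x\<in>\<Gamma>. interp u x \<le> Mg" using gb by blast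
    show "\<forall>c. Mg < c \<longrightarrow> {x \<in> \<Gamma>. c \<le> interp u x} = {}" using gb by force
    show "\<forall>c. 0 < c \<and> c \<le> Mg \<longrightarrow> contractible {x \<in> \<Gamma>. c \<le> interp u x}"
    proof clarify
      fix c :: real assume c: "0 < c" "c \<le> Mg"
      have "u v \<le> M" using M(1) v VG by auto
      then have "contractible {x\<in>\<Gamma>. c \<le> u x}" using M(2) c v by auto
      moreover have "\<exists>v\<in>V. c \<le> u v" using v c by auto
      ultimately show "contractible {x \<in> \<Gamma>. c \<le> interp u x}"
        using T_contractible[OF cont] by blast
    qed
  qed
qed

end

theorem lemma2p2:
  fixes \<Gamma> :: "'a::euclidean_space set" and V :: "'a set" and E :: "('a \<times> 'a) set"
    and f :: "'a \<Rightarrow> real" and I :: "'i set" and fs :: "'i \<Rightarrow> 'a \<Rightarrow> real"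
  assumes "metric_tree \<Gamma> V E"
    and "continuous_on \<Gamma> f" and "\<forall>x\<in>\<Gamma>. 0 \<le> f x" and "edge_linear E f"
    and "finite I"
    and "\<forall>\<alpha>\<in>I. unimodal \<Gamma> (fs \<alpha>)"
    and "\<forall>x\<in>\<Gamma>. f x = (\<Sum>\<alpha>\<in>I. fs \<alpha> x)"
  shows "\<exists>gs :: 'i \<Rightarrow> 'a \<Rightarrow> real.
           (\<forall>\<alpha>\<in>I. unimodal \<Gamma> (gs \<alpha>) \<and> edge_linear E (gs \<alpha>)) \<and>
           (\<forall>x\<in>\<Gamma>. f x = (\<Sum>\<alpha>\<in>I. gs \<alpha> x))"
proof -
  interpret T: mtree \<Gamma> V E using assms(1) by (rule mtree.intro)
  have fV: "\<forall>v\<in>V. f v = (\<Sum>\<alpha>\<in>I. fs \<alpha> v)" using assms(7) T.VG by blast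
  show ?thesis
  proof (intro exI[of _ "\<lambda>\<alpha>. T.interp (fs \<alpha>)"] conjI ballI)
    fix \<alpha> assume "\<alpha> \<in> I"
    then show "unimodal \<Gamma> (T.interp (fs \<alpha>))" using assms(6) T.interp_unimodal by blast
    show "edge_linear E (T.interp (fs \<alpha>))" by (rule T.interp_edge_linear)
  next
    fix x assume "x \<in> \<Gamma>"
    then show "f x = (\<Sum>\<alpha>\<in>I. T.interp (fs \<alpha>) x)"
      using T.interp_sum[OF assms(5) assms(4) fV] by blast
  qed
qed


end
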